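(* For every $\epsilon>0$ there exist $M\in\mathbb N$ and $R>0$ such that for all $m\ge M$ and all $r\ge R$, $$\mathbb E\big(v_m^r\big)\le(2+\epsilon)\log r.$$
   Context: Expectation is with respect to Lebesgue measure $\lambda$ on $[0,1)$; $\log$ is natural. For $m\in\mathbb N$, $j\in\mathbb N_0$, $i\in\{0,\dots,2^{m-1}-1\}$ let $J^m_{j,i}=[2^{-j}-(i+1)2^{-(j+m)},\,2^{-j}-i2^{-(j+m)})$ (these partition $(0,1)$) and $y_{j,i}=\frac{2^{j+m+1}}{2^m-i-1}$. For $r\ge1$, $v_m^r$ is the function constant on each $J^m_{j,i}$ with value $y_{\min\{j,\lfloor\log_2r\rfloor\},i}$. *)

theory Defs
  imports "HOL-Analysis.Analysis"
begin

definition Jint :: "nat \<Rightarrow> nat \<Rightarrow> nat \<Rightarrow> real set" where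
  "Jint m j i = {(1/2)^j - real (i+1) * (1/2)^(j+m) ..< (1/2)^j - real i * (1/2)^(j+m)}"

definition yval :: "nat \<Rightarrow> nat \<Rightarrow> nat \<Rightarrow> real" where
  "yval m j i = 2^(j+m+1) / (2^m - real i - 1)"

text \<open>v_m^r: constant on each J^m_{j,i} (i < 2^(m-1)) with value y_{min j floor(log2 r), i};
  set to 0 outside (0,1) where no such interval contains x (a null set).\<close>
definition vfun :: "nat \<Rightarrow> real \<Rightarrow> real \<Rightarrow> real" where
  "vfun m r x =
     (if \<exists>j i. i < 2^(m-1) \<and> x \<in> Jint m j i
      then (case (THE p. snd p < 2^(m-1) \<and> x \<in> Jint m (fst p) (snd p)) of
              (j, i) \<Rightarrow> yval m (min j (nat \<lfloor>log 2 r\<rfloor>)) i)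
      else 0)"

end

theory Submission
  imports Defs
begin

lemma Jint_bounds:
  assumes "i < 2^(m-1)" "m \<ge> 1" "x \<in> Jint m j i"
  shows "(1/2::real)^(Suc j) \<le> x" "x < (1/2)^j"
proof -
  have e: "(1/2::real)^(j+m) * 2^(m-1) = (1/2)^(Suc j)"
  proof -
    have "m = Suc (m-1)" using assms by simp
    then have "(1/2::real)^(j+m) = (1/2)^(Suc j) * (1/2)^(m-1)"
      by (metis add_Suc_shift power_add)
    then show ?thesis by (simp add: power_one_over)
  qed
  have "real (i+1) \<le> 2^(m-1)"
  proof -
    have "i + 1 \<le> (2::nat)^(m-1)" using assms(1) by simp
    then show ?thesis by (metis of_nat_le_iff of_nat_numeral of_nat_power)
  qed
  then have f1: "real (i+1) * (1/2::real)^(j+m) \<le> 2^(m-1) * (1/2)^(j+m)"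
    by (intro mult_right_mono) auto
  have f2: "(1/2::real)^j - (1/2)^(Suc j) = (1/2)^(Suc j)" by simp
  have f3: "(1/2::real)^j - real (i+1) * (1/2)^(j+m) \<le> x"
    using assms(3) unfolding Jint_def by simp
  have e': "2^(m-1) * (1/2::real)^(j+m) = (1/2)^(Suc j)" using e by (simp add: mult.commute)
  show "(1/2::real)^(Suc j) \<le> x" using f1 f2 f3 e' by linarith
  have "x < (1/2::real)^j - real i * (1/2)^(j+m)"
    using assms(3) unfolding Jint_def by simp
  moreover have "0 \<le> real i * (1/2::real)^(j+m)" by simp
  ultimately show "x < (1/2)^j" by linarith
qed

lemma Jint_unique:
  assumes "i < 2^(m-1)" "i' < 2^(m-1)" "m \<ge> 1" "x \<in> Jint m j i" "x \<in> Jint m j' i'"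
  shows "j = j' \<and> i = i'"
proof -
  have a: "(1/2::real)^(Suc j) \<le> x" "x < (1/2)^j" using Jint_bounds assms(1,3,4) by auto
  have b: "(1/2::real)^(Suc j') \<le> x" "x < (1/2)^j'" using Jint_bounds assms(2,3,5) by auto
  have jj: "j = j'"
  proof (rule ccontr)
    assume "j \<noteq> j'"
    then consider "Suc j \<le> j'" | "Suc j' \<le> j" by linarith
    then show False
    proof cases
      case 1
      then have "(1/2::real)^j' \<le> (1/2)^(Suc j)" by (intro power_decreasing) auto
      then show False using a b by linarith
    next
      case 2
      then have "(1/2::real)^j \<le> (1/2)^(Suc j')" by (intro power_decreasing) auto
      then show False using a b by linarith
    qed
  qed
  have ii: "i = i'"
  proof (rule ccontr)
    let ?H = "(1/2::real)^(j+m)" and ?A = "(1/2::real)^j"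
    have h0: "0 \<le> ?H" by simp
    have x1: "?A - real (i+1) * ?H \<le> x" "x < ?A - real i * ?H" using assms(4) unfolding Jint_def by auto
    have x2: "?A - real (i'+1) * ?H \<le> x" "x < ?A - real i' * ?H" using assms(5) jj unfolding Jint_def by auto
    assume "i \<noteq> i'"
    then consider "i + 1 \<le> i'" | "i' + 1 \<le> i" by linarith
    then show False
    proof cases
      case 1
      then have "real (i+1) * ?H \<le> real i' * ?H" by (intro mult_right_mono) auto
      then show False using x1 x2 by linarith
    next
      case 2
      then have "real (i'+1) * ?H \<le> real i * ?H" by (intro mult_right_mono) auto
      then show False using x1 x2 by linarith
    qed
  qed
  show ?thesis using jj ii by simp
qed

lemma vfun_val:
  assumes "i < 2^(m-1)" "m \<ge> 1" "x \<in> Jint m j i"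
  shows "vfun m r x = yval m (min j (nat \<lfloor>log 2 r\<rfloor>)) i"
proof -
  have ex: "\<exists>j i. i < 2^(m-1) \<and> x \<in> Jint m j i" using assms by blast
  have th: "(THE p. snd p < 2^(m-1) \<and> x \<in> Jint m (fst p) (snd p)) = (j, i)"
  proof (rule the_equality)
    show "snd (j, i) < 2 ^ (m - 1) \<and> x \<in> Jint m (fst (j, i)) (snd (j, i))" using assms by simp
  next
    fix p :: "nat \<times> nat"
    assume "snd p < 2 ^ (m - 1) \<and> x \<in> Jint m (fst p) (snd p)"
    then have "j = fst p \<and> i = snd p" using Jint_unique[OF assms(1) _ assms(2,3)] by blast
    then show "p = (j, i)" by (cases p) auto
  qed
  show ?thesis unfolding vfun_def using ex th by simp
qed

lemma term_eq0:
  assumes "p \<le> j"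
  shows "2^(p+m+1) / D * (1/2)^(j+m) = 2 * (1/2::real)^(j - p) * (1 / D)"
proof -
  define d where "d = j - p"
  have j: "j = p + d" unfolding d_def using assms by simp
  have "(2::real)^(p+m+1) * (1/2)^(p+d+m) = 2 * (1/2)^d"
    by (simp add: power_add power_one_over field_simps)
  then show ?thesis unfolding j d_def[symmetric] by (simp add: field_simps power_add)
qed

lemma term_eq:
  "yval m (min j k) i * (1/2)^(j+m) = 2 * (1/2::real)^(j - min j k) * (1 / (2^m - real i - 1))"
  unfolding yval_def by (rule term_eq0) simp

lemma asum:
  "(\<lambda>j. (1/2::real)^(j - min j k)) sums (real k + 2)"
proof -
  let ?a = "\<lambda>j. (1/2::real)^(j - min j k)"
  have sh: "(\<lambda>n. ?a (n + Suc k)) = (\<lambda>n. (1/2) * (1/2)^n)" by (auto simp: fun_eq_iff)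
  have g: "(\<lambda>n. (1/2::real) * (1/2)^n) sums ((1/2) * 2)"
    using sums_mult[OF geometric_sums[of "1/2::real"], of "1/2"] by simp
  have g2: "(\<lambda>n. ?a (n + Suc k)) sums 1" unfolding sh using g by simp
  have fin: "(\<Sum>j<Suc k. ?a j) = real (Suc k)" by simp
  have "?a sums (1 + (\<Sum>j<Suc k. ?a j))"
    using sums_iff_shift[of ?a "Suc k" 1] g2 by simp
  then show ?thesis using fin by (simp add: add.commute)
qed

lemma inv_le_ln_diff:
  assumes "(x::real) > 1"
  shows "1/x \<le> ln x - ln (x-1)"
proof -
  have "ln ((x-1)/x) \<le> (x-1)/x - 1" using assms by (intro ln_le_minus_one) auto
  moreover have "ln ((x-1)/x) = ln (x-1) - ln x" using assms by (simp add: ln_div)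
  moreover have "(x-1)/x - 1 = - (1/x)" using assms by (simp add: field_simps)
  ultimately show ?thesis by linarith
qed

lemma ln_diff_le:
  assumes "(y::real) > 0"
  shows "ln (y+1) - ln y \<le> 1/y"
proof -
  have "ln ((y+1)/y) \<le> (y+1)/y - 1" using assms by (intro ln_le_minus_one) auto
  moreover have "ln ((y+1)/y) = ln (y+1) - ln y" using assms by (simp add: ln_div)
  moreover have "(y+1)/y - 1 = 1/y" using assms by (simp add: field_simps)
  ultimately show ?thesis by linarith
qed

lemma S_bound:
  assumes "m \<ge> 2"
  shows "(\<Sum>i<(2::nat)^(m-1). 1/(2^m - real i - 1)) \<le> ln 2 + 1/(2*2^(m-1) - 2)"
proof -
  define N :: nat where "N = 2^(m-1)"
  have m2: "(2::real)^m = 2 * real N" unfolding N_def using assms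
    by (metis Suc_diff_1 less_le_trans numeral_le_iff numerals(1) of_nat_numeral of_nat_power
        pos2 power_Suc semiring_norm(69) zero_less_Suc)
  have "(2::nat)^1 \<le> 2^(m-1)" using assms by (intro power_increasing) auto
  then have N2: "real N \<ge> 2" unfolding N_def by (metis of_nat_le_iff of_nat_numeral power_one_right)
  define g where "g i = ln (2^m - real i - 1)" for i :: nat
  have "(\<Sum>i<N. 1/(2^m - real i - 1)) \<le> (\<Sum>i<N. g i - g (Suc i))"
  proof (rule sum_mono)
    fix i assume "i \<in> {..<N}"
    then have "real i + 1 \<le> real N" by simp
    then have gt: "2^m - real i - 1 > 1" using m2 N2 by linarith
    have "g i - g (Suc i) = ln (2^m - real i - 1) - ln ((2^m - real i - 1) - 1)"
      unfolding g_def by (simp add: algebra_simps)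
    then show "1/(2^m - real i - 1) \<le> g i - g (Suc i)" using inv_le_ln_diff[OF gt] by simp
  qed
  also have "\<dots> = g 0 - g N" by (rule sum_lessThan_telescope')
  also have "\<dots> = ln ((2 * real N - 2) + 1) - ln (real N - 1)" unfolding g_def m2 by (simp add: algebra_simps)
  also have "\<dots> \<le> ln 2 + 1/(2 * real N - 2)"
  proof -
    have p: "2 * real N - 2 > 0" using N2 by simp
    have "ln (2 * real N - 2) = ln 2 + ln (real N - 1)"
    proof -
      have "2 * real N - 2 = 2 * (real N - 1)" by simp
      moreover have "ln (2 * (real N - 1)) = ln 2 + ln (real N - 1)" using N2 by (intro ln_mult_pos) auto
      ultimately show ?thesis by simp
    qed
    then show ?thesis using ln_diff_le[OF p] by linarith
  qed
  finally show ?thesis unfolding N_def by simp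
qed

lemma D_pos:
  assumes "i < (2::nat)^(m-1)" "m \<ge> 1"
  shows "(2::real)^m - real i - 1 > 0"
proof -
  have "i + 1 \<le> (2::nat)^(m-1)" using assms(1) by simp
  then have a: "real i + 1 \<le> 2^(m-1)" by (metis of_nat_1 of_nat_add of_nat_le_iff of_nat_numeral of_nat_power)
  have "m = Suc (m-1)" using assms by simp
  then have "(2::real)^m = 2 * 2^(m-1)" by (metis power_Suc)
  moreover have "(0::real) < 2^(m-1)" by simp
  ultimately show ?thesis using a by linarith
qed

lemma Jint_sets[measurable]: "Jint m j i \<in> sets lborel"
  unfolding Jint_def by simp

lemma Jint_measure: "emeasure lborel (Jint m j i) = ennreal ((1/2)^(j+m))"
proof -
  have le: "real i * (1/2::real)^(j+m) \<le> real (i+1) * (1/2)^(j+m)"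
    by (intro mult_right_mono) auto
  show ?thesis unfolding Jint_def
    by (subst emeasure_lborel_Ico) (use le in \<open>auto simp: algebra_simps\<close>)
qed

lemma integral_bound:
  assumes "m \<ge> 1"
  shows "(\<integral>\<^sup>+ x \<in> {0..<1}. ennreal (vfun m r x) \<partial>lborel)
     \<le> ennreal (2 * (real (nat \<lfloor>log 2 r\<rfloor>) + 2) * (\<Sum>i<(2::nat)^(m-1). 1/(2^m - real i - 1)))"
proof -
  define k where "k = nat \<lfloor>log 2 r\<rfloor>"
  define N :: nat where "N = 2^(m-1)"
  define S where "S = (\<Sum>i<N. 1/(2^m - real i - 1::real))"
  define a where "a j = (1/2::real)^(j - min j k)" for j
  define G where "G j i x = ennreal (yval m (min j k) i) * indicator (Jint m j i) x" for j i x
  have pw: "ennreal (vfun m r x) * indicator {0..<1} x \<le> (\<Sum>j. \<Sum>i<N. G j i x)" for x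
  proof (cases "\<exists>j i. i < N \<and> x \<in> Jint m j i")
    case True
    then obtain j0 i0 where ji: "i0 < N" "x \<in> Jint m j0 i0" by blast
    have v: "vfun m r x = yval m (min j0 k) i0"
      unfolding k_def by (rule vfun_val) (use ji assms N_def in auto)
    have "ennreal (vfun m r x) * indicator {0..<1} x \<le> ennreal (vfun m r x)"
      by (simp split: split_indicator)
    also have "\<dots> = G j0 i0 x" unfolding G_def v using ji by simp
    also have "\<dots> \<le> (\<Sum>i<N. G j0 i x)" by (rule member_le_sum) (use ji in auto)
    also have "\<dots> = (\<Sum>j\<in>{j0}. \<Sum>i<N. G j i x)" by simp
    also have "\<dots> \<le> (\<Sum>j. \<Sum>i<N. G j i x)" by (rule sum_le_suminf) (auto intro: summableI)
    finally show ?thesis .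
  next
    case False
    then have "vfun m r x = 0" unfolding vfun_def N_def by auto
    then show ?thesis by simp
  qed
  have meas: "(\<lambda>x. G j i x) \<in> borel_measurable lborel" for j i
    unfolding G_def by measurable
  have "(\<integral>\<^sup>+ x \<in> {0..<1}. ennreal (vfun m r x) \<partial>lborel) \<le> (\<integral>\<^sup>+ x. (\<Sum>j. \<Sum>i<N. G j i x) \<partial>lborel)"
    by (rule nn_integral_mono) (use pw in auto)
  also have "\<dots> = (\<Sum>j. \<integral>\<^sup>+ x. (\<Sum>i<N. G j i x) \<partial>lborel)"
    by (rule nn_integral_suminf) (use meas in auto)
  also have "\<dots> = (\<Sum>j. \<Sum>i<N. \<integral>\<^sup>+ x. G j i x \<partial>lborel)"
    by (subst nn_integral_sum) (use meas in auto)
  also have "\<dots> = (\<Sum>j. ennreal (2 * a j * S))"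
  proof -
    have "(\<Sum>i<N. \<integral>\<^sup>+ x. G j i x \<partial>lborel) = ennreal (2 * a j * S)" for j
    proof -
      have "(\<Sum>i<N. \<integral>\<^sup>+ x. G j i x \<partial>lborel) = (\<Sum>i<N. ennreal (2 * a j * (1 / (2^m - real i - 1))))"
      proof (rule sum.cong[OF refl])
        fix i assume "i \<in> {..<N}"
        then have D: "(2::real)^m - real i - 1 > 0" using D_pos assms N_def by auto
        have "(\<integral>\<^sup>+ x. G j i x \<partial>lborel) = ennreal (yval m (min j k) i) * ennreal ((1/2)^(j+m))"
          unfolding G_def by (subst nn_integral_cmult_indicator) (use Jint_sets[of m j i] in \<open>simp_all add: Jint_measure\<close>)
        also have "\<dots> = ennreal (yval m (min j k) i * (1/2)^(j+m))"
          using D by (subst ennreal_mult) (auto simp: yval_def)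
        also have "\<dots> = ennreal (2 * a j * (1 / (2^m - real i - 1)))"
          unfolding a_def by (simp only: term_eq)
        finally show "(\<integral>\<^sup>+ x. G j i x \<partial>lborel) = ennreal (2 * a j * (1 / (2^m - real i - 1)))" .
      qed
      also have "\<dots> = ennreal (\<Sum>i<N. 2 * a j * (1 / (2^m - real i - 1)))"
      proof (rule sum_ennreal)
        fix i assume "i \<in> {..<N}"
        then have D: "(2::real)^m - real i - 1 > 0" using D_pos assms N_def by auto
        show "0 \<le> 2 * a j * (1 / (2^m - real i - 1))" using D unfolding a_def by simp
      qed
      also have "\<dots> = ennreal (2 * a j * S)" unfolding S_def by (simp add: sum_distrib_left)
      finally show ?thesis .
    qed
    then show ?thesis by simp
  qed
  also have "\<dots> = ennreal (\<Sum>j. 2 * a j * S)"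
  proof (rule suminf_ennreal2)
    have S0: "S \<ge> 0" unfolding S_def using D_pos assms N_def
      by (intro sum_nonneg) (auto simp: less_imp_le)
    then show "\<And>j. 0 \<le> 2 * a j * S" by (simp add: a_def)
    show "summable (\<lambda>j. 2 * a j * S)"
      using asum[of k] unfolding a_def by (intro summable_mult2 summable_mult) (auto simp: sums_iff)
  qed
  also have "(\<Sum>j. 2 * a j * S) = 2 * (real k + 2) * S"
  proof -
    have "(\<lambda>j. 2 * a j * S) sums (2 * (real k + 2) * S)"
      using sums_mult2[OF sums_mult[OF asum[of k], of 2], of S] unfolding a_def by simp
    then show ?thesis by (simp add: sums_iff)
  qed
  finally show ?thesis unfolding k_def S_def N_def .
qed

lemma ln2_bounds: "2/3 \<le> ln (2::real)" "ln (2::real) \<le> 25/36"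
  using ln2_ge_two_thirds ln2_le_25_over_36 by auto

theorem mainTheorem15:
  fixes \<epsilon> :: real
  assumes "\<epsilon> > 0"
  shows "\<exists>M::nat. \<exists>R::real. M \<ge> 1 \<and> R > 0 \<and>
           (\<forall>m r. m \<ge> M \<longrightarrow> r \<ge> R \<longrightarrow> r \<ge> 1 \<longrightarrow>
              (\<integral>\<^sup>+ x \<in> {0..<1}. ennreal (vfun m r x) \<partial>lborel)
                \<le> ennreal ((2 + \<epsilon>) * ln r))"
proof -
  define M :: nat where "M = nat \<lceil>4/\<epsilon>\<rceil> + 3"
  define R :: real where "R = exp (16/\<epsilon>)"
  have "M \<ge> 1 \<and> R > 0 \<and>
           (\<forall>m r. m \<ge> M \<longrightarrow> r \<ge> R \<longrightarrow> r \<ge> 1 \<longrightarrow>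
              (\<integral>\<^sup>+ x \<in> {0..<1}. ennreal (vfun m r x) \<partial>lborel)
                \<le> ennreal ((2 + \<epsilon>) * ln r))"
  proof (intro conjI allI impI)
    show "M \<ge> 1" unfolding M_def by simp
    show "R > 0" unfolding R_def by simp
    fix m :: nat and r :: real
    assume mM: "m \<ge> M" and rR: "r \<ge> R" and r1: "r \<ge> 1"
    define k where "k = nat \<lfloor>log 2 r\<rfloor>"
    define S where "S = (\<Sum>i<(2::nat)^(m-1). 1/(2^m - real i - 1::real))"
    define P :: real where "P = 2^(m-1)"
    define d where "d = 1/(2*P - 2)"
    define L where "L = ln r"
    have m3: "m \<ge> 3" using mM unfolding M_def by simp
    have I: "(\<integral>\<^sup>+ x \<in> {0..<1}. ennreal (vfun m r x) \<partial>lborel) \<le> ennreal (2 * (real k + 2) * S)"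
      unfolding k_def S_def by (rule integral_bound) (use m3 in simp)
    have Sb: "S \<le> ln 2 + d" unfolding S_def d_def P_def by (rule S_bound) (use m3 in simp)
    have S0: "S \<ge> 0" unfolding S_def using D_pos m3
      by (intro sum_nonneg) (auto simp: less_imp_le)
    have "m - 1 < (2::nat)^(m-1)" by (rule less_exp)
    then have "m \<le> (2::nat)^(m-1)" using m3 by linarith
    then have "real m \<le> P" unfolding P_def
      by (metis of_nat_le_iff of_nat_numeral of_nat_power)
    moreover have "real m \<ge> 4/\<epsilon> + 3" using mM unfolding M_def by linarith
    ultimately have P: "P \<ge> 4/\<epsilon> + 3" by linarith
    have e4: "4/\<epsilon> > 0" using assms by simp
    have dpos: "2*P - 2 > 0" using P e4 by linarith
    have d0: "d \<ge> 0" unfolding d_def using dpos by simp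
    have P3: "P \<ge> 3" using P e4 by linarith
    have d1: "d \<le> 1/4" unfolding d_def using P3 by (simp add: divide_simps)
    have P2: "2*P - 2 \<ge> 8/\<epsilon>" using P by simp
    have d2: "d \<le> \<epsilon>/8"
    proof -
      have pos: "8/\<epsilon> > 0" using assms by simp
      have "d \<le> 1/(8/\<epsilon>)" unfolding d_def
        by (rule divide_left_mono[OF P2]) (use pos dpos in auto)
      then show ?thesis by simp
    qed
    have L16: "L \<ge> 16/\<epsilon>" unfolding L_def
      using rR R_def by (metis exp_gt_zero ln_exp ln_le_cancel_iff order_less_le_trans)
    have L0: "L \<ge> 0" unfolding L_def using r1 by simp
    have eL: "\<epsilon> * L \<ge> 16" using L16 assms by (simp add: divide_simps mult.commute)
    have l2: "2/3 \<le> ln (2::real)" "ln (2::real) \<le> 25/36" by (rule ln2_bounds)+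
    have k0: "real k \<le> L / ln 2"
    proof -
      have "log 2 r \<ge> 0" using r1 by simp
      then have "real k \<le> log 2 r" unfolding k_def by linarith
      then show ?thesis unfolding L_def log_def .
    qed
    have h1: "real k * ln 2 \<le> L" using k0 l2 by (simp add: divide_simps)
    have "L / ln 2 \<le> L / (2/3)" using l2 L0 by (intro divide_left_mono) auto
    with k0 have "real k \<le> L / (2/3)" by (rule order_trans)
    then have k1: "real k \<le> 3/2 * L" by simp
    have h2: "real k * d \<le> (3/2 * L) * (\<epsilon>/8)" using k1 d2 d0 by (intro mult_mono) auto
    have "2 * (real k + 2) * S \<le> 2 * (real k + 2) * (ln 2 + d)"
      using Sb by (intro mult_left_mono) auto
    also have "\<dots> = 2 * (real k * ln 2) + 2 * (real k * d) + 4 * ln 2 + 4 * d" by (simp add: algebra_simps)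
    also have "\<dots> \<le> (2 + \<epsilon>) * L" using h1 h2 eL l2 d1 by (simp add: algebra_simps)
    finally have "2 * (real k + 2) * S \<le> (2 + \<epsilon>) * ln r" unfolding L_def .
    then show "(\<integral>\<^sup>+ x \<in> {0..<1}. ennreal (vfun m r x) \<partial>lborel) \<le> ennreal ((2 + \<epsilon>) * ln r)"
      using I by (meson ennreal_leI order_trans)
  qed
  then show ?thesis by blast
qed

end
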